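(* Let $G$ be a graph with a length-function $\ell$. The set of cycles of $G$ that are fully geodesic in $G$ generates the cycle space of $G$ (over $\mathbb{F}_2$).
   Context: All graphs are finite; parallel edges are allowed, loops are not; a cycle may consist of two vertices joined by two parallel edges. A length-function on a graph $G$ is a map $\ell:E(G)\to\mathbb{R}^+$ (strictly positive reals); $\ell(H)=\sum_{e\in E(H)}\ell(e)$ for subgraphs $H$, which carry the restricted length-function. $\mathrm{sd}_G(A)$ is the minimum of $\ell(S)$ over connected subgraphs $S\subseteq G$ with $A\subseteq V(S)$ ($\infty$ if none). $H\subseteq G$ is $k$-geodesic in $G$ if $\mathrm{sd}_H(A)=\mathrm{sd}_G(A)$ for all $A\subseteq V(H)$ with $|A|\le k$, and fully geodesic if it is $k$-geodesic for every $k\in\mathbb{N}$. The cycle space of $G$ is the $\mathbb{F}_2$-vector space of edge sets of $G$ in which every vertex has even degree, with symmetric difference as addition. *)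

theory Defs
  imports Complex_Main "HOL-Library.Extended_Real"
begin

text \<open>A finite multigraph: vertex set V, edge set E, and an incidence map
  ends assigning to each edge its set of two distinct endvertices
  (parallel edges allowed, loops excluded).\<close>

definition graph :: "'v set \<Rightarrow> 'e set \<Rightarrow> ('e \<Rightarrow> 'v set) \<Rightarrow> bool" where
  "graph V E ends \<longleftrightarrow> finite V \<and> finite E \<and>
     (\<forall>e\<in>E. ends e \<subseteq> V \<and> card (ends e) = 2)"

definition subgraph :: "'v set \<Rightarrow> 'e set \<Rightarrow> ('e \<Rightarrow> 'v set) \<Rightarrow> 'v set \<times> 'e set \<Rightarrow> bool" where
  "subgraph V E ends H \<longleftrightarrow> fst H \<subseteq> V \<and> snd H \<subseteq> E \<and> (\<forall>e\<in>snd H. ends e \<subseteq> fst H)"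

definition connected_sg :: "('e \<Rightarrow> 'v set) \<Rightarrow> 'v set \<times> 'e set \<Rightarrow> bool" where
  "connected_sg ends H \<longleftrightarrow> fst H \<noteq> {} \<and>
     (\<forall>X. X \<noteq> {} \<and> X \<subset> fst H \<longrightarrow>
        (\<exists>e\<in>snd H. ends e \<inter> X \<noteq> {} \<and> ends e - X \<noteq> {}))"

definition edge_length :: "('e \<Rightarrow> real) \<Rightarrow> 'e set \<Rightarrow> real" where
  "edge_length len F = (\<Sum>e\<in>F. len e)"

text \<open>Steiner distance sd_H(A) in H (infinity if no connected subgraph contains A).\<close>
definition sd :: "('e \<Rightarrow> 'v set) \<Rightarrow> ('e \<Rightarrow> real) \<Rightarrow> 'v set \<times> 'e set \<Rightarrow> 'v set \<Rightarrow> ereal" where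
  "sd ends len H A = Inf {ereal (edge_length len (snd S)) | S.
      subgraph (fst H) (snd H) ends S \<and> connected_sg ends S \<and> A \<subseteq> fst S}"

definition k_geodesic :: "'v set \<Rightarrow> 'e set \<Rightarrow> ('e \<Rightarrow> 'v set) \<Rightarrow> ('e \<Rightarrow> real) \<Rightarrow> nat \<Rightarrow> 'v set \<times> 'e set \<Rightarrow> bool" where
  "k_geodesic V E ends len k H \<longleftrightarrow> subgraph V E ends H \<and>
     (\<forall>A. A \<subseteq> fst H \<and> finite A \<and> card A \<le> k \<longrightarrow> sd ends len H A = sd ends len (V, E) A)"

definition fully_geodesic :: "'v set \<Rightarrow> 'e set \<Rightarrow> ('e \<Rightarrow> 'v set) \<Rightarrow> ('e \<Rightarrow> real) \<Rightarrow> 'v set \<times> 'e set \<Rightarrow> bool" where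
  "fully_geodesic V E ends len H \<longleftrightarrow> (\<forall>k. k_geodesic V E ends len k H)"

definition is_cycle :: "'v set \<Rightarrow> 'e set \<Rightarrow> ('e \<Rightarrow> 'v set) \<Rightarrow> 'v set \<times> 'e set \<Rightarrow> bool" where
  "is_cycle V E ends C \<longleftrightarrow> subgraph V E ends C \<and> connected_sg ends C \<and>
     (\<forall>v\<in>fst C. card {e\<in>snd C. v \<in> ends e} = 2)"

definition cycle_space :: "'v set \<Rightarrow> 'e set \<Rightarrow> ('e \<Rightarrow> 'v set) \<Rightarrow> 'e set set" where
  "cycle_space V E ends = {F. F \<subseteq> E \<and> (\<forall>v\<in>V. even (card {e\<in>F. v \<in> ends e}))}"

text \<open>F_2-sum (iterated symmetric difference) of a finite family of edge sets.\<close>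
definition sym_sum :: "'e set set \<Rightarrow> 'e set" where
  "sym_sum DD = {e. odd (card {D\<in>DD. e \<in> D})}"

end

theory Submission
  imports Defs
begin

definition xr :: "'a set \<Rightarrow> 'a set \<Rightarrow> 'a set" where
  "xr X Y = (X - Y) \<union> (Y - X)"

definition deg :: "('e \<Rightarrow> 'v set) \<Rightarrow> 'e set \<Rightarrow> 'v \<Rightarrow> nat" where
  "deg ends F v = card {e\<in>F. v \<in> ends e}"

definition oddv :: "('e \<Rightarrow> 'v set) \<Rightarrow> 'e set \<Rightarrow> 'v set" where
  "oddv ends F = {v. odd (deg ends F v)}"

lemma card_xr:
  assumes "finite X" "finite Y"
  shows "card (xr X Y) + 2 * card (X \<inter> Y) = card X + card Y"
proof -
  have d: "(X - Y) \<inter> (Y - X) = {}" by auto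
  have "card (xr X Y) = card (X - Y) + card (Y - X)"
    unfolding xr_def using assms d by (simp add: card_Un_disjoint)
  moreover have "card (X - Y) + card (X \<inter> Y) = card X"
    using assms by (metis Diff_Diff_Int card_Diff_subset_Int card_mono inf_le1 le_add_diff_inverse2 Int_commute finite_Int)
  moreover have "card (Y - X) + card (X \<inter> Y) = card Y"
    using assms by (metis Diff_Diff_Int card_Diff_subset_Int card_mono inf_le1 le_add_diff_inverse2 Int_commute finite_Int)
  ultimately show ?thesis by simp
qed

lemma even_card_xr:
  assumes "finite X" "finite Y"
  shows "even (card (xr X Y)) \<longleftrightarrow> (even (card X) \<longleftrightarrow> even (card Y))"
proof -
  have "card (xr X Y) + 2 * card (X \<inter> Y) = card X + card Y" using card_xr[OF assms] .
  then show ?thesis by (metis even_add even_mult_iff even_numeral)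
qed

lemma oddv_xr:
  assumes "finite F" "finite G"
  shows "oddv ends (xr F G) = xr (oddv ends F) (oddv ends G)"
proof -
  have "\<And>v. {e\<in>xr F G. v \<in> ends e} = xr {e\<in>F. v \<in> ends e} {e\<in>G. v \<in> ends e}"
    unfolding xr_def by auto
  then have "\<And>v. odd (deg ends (xr F G) v) \<longleftrightarrow> (odd (deg ends F v) \<noteq> odd (deg ends G v))"
    unfolding deg_def using assms by (simp add: even_card_xr)
  then show ?thesis unfolding oddv_def xr_def by auto
qed

lemma oddv_empty[simp]: "oddv ends {} = {}"
  unfolding oddv_def deg_def by simp

lemma oddv_single: "oddv ends {f} = ends f"
proof -
  have "\<And>v. {e\<in>{f}. v \<in> ends e} = (if v \<in> ends f then {f} else {})" by auto
  then show ?thesis unfolding oddv_def deg_def by auto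
qed

lemma xr_two: "x \<noteq> y \<Longrightarrow> xr {x} {y} = {x, y}"
  unfolding xr_def by auto

lemma xr_same[simp]: "xr X X = {}" unfolding xr_def by auto
lemma xr_empty[simp]: "xr X {} = X" "xr {} X = X" unfolding xr_def by auto
lemma xr_comm: "xr X Y = xr Y X" unfolding xr_def by auto
lemma xr_assoc: "xr (xr X Y) Z = xr X (xr Y Z)" unfolding xr_def by auto
lemma xr_lcomm: "xr X (xr Y Z) = xr Y (xr X Z)" unfolding xr_def by auto
lemma xr_cancel: "xr (xr X Y) Y = X" unfolding xr_def by auto
lemma xr_disj: "X \<inter> Y = {} \<Longrightarrow> xr X Y = X \<union> Y" unfolding xr_def by auto
lemma xr_sub: "X \<subseteq> E \<Longrightarrow> Y \<subseteq> E \<Longrightarrow> xr X Y \<subseteq> E" unfolding xr_def by auto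
lemma finite_xr: "finite X \<Longrightarrow> finite Y \<Longrightarrow> finite (xr X Y)" unfolding xr_def by auto

lemma el_nonneg: "\<forall>e\<in>E. len e > 0 \<Longrightarrow> X \<subseteq> E \<Longrightarrow> edge_length len X \<ge> 0"
  unfolding edge_length_def by (meson less_imp_le subsetD sum_nonneg)

lemma el_mono: "\<forall>e\<in>E. len e > 0 \<Longrightarrow> finite Y \<Longrightarrow> Y \<subseteq> E \<Longrightarrow> X \<subseteq> Y \<Longrightarrow> edge_length len X \<le> edge_length len Y"
  unfolding edge_length_def by (rule sum_mono2) (auto, meson less_imp_le subsetD)

lemma el_strict: "\<forall>e\<in>E. len e > 0 \<Longrightarrow> finite Y \<Longrightarrow> Y \<subseteq> E \<Longrightarrow> X \<subset> Y \<Longrightarrow> edge_length len X < edge_length len Y"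
proof -
  assume a: "\<forall>e\<in>E. len e > 0" "finite Y" "Y \<subseteq> E" "X \<subset> Y"
  then obtain y where y: "y \<in> Y" "y \<notin> X" by auto
  have "edge_length len Y = edge_length len X + edge_length len (Y - X)"
    unfolding edge_length_def using a by (metis psubset_imp_subset sum.subset_diff add.commute)
  moreover have "edge_length len (Y - X) > 0"
    unfolding edge_length_def using a y
    by (intro sum_pos2[of _ y]) (auto intro: less_imp_le)
  ultimately show ?thesis by simp
qed

lemma el_xr: "\<forall>e\<in>E. len e > 0 \<Longrightarrow> finite X \<Longrightarrow> finite Y \<Longrightarrow> X \<subseteq> E \<Longrightarrow> Y \<subseteq> E \<Longrightarrow>
   edge_length len (xr X Y) \<le> edge_length len X + edge_length len Y"
proof -
  assume a: "\<forall>e\<in>E. len e > 0" "finite X" "finite Y" "X \<subseteq> E" "Y \<subseteq> E"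
  have "edge_length len (xr X Y) = edge_length len (X - Y) + edge_length len (Y - X)"
    unfolding edge_length_def xr_def using a by (subst sum.union_disjoint) auto
  moreover have "edge_length len (X - Y) \<le> edge_length len X"
    using a by (intro el_mono[of E]) auto
  moreover have "edge_length len (Y - X) \<le> edge_length len Y"
    using a by (intro el_mono[of E]) auto
  ultimately show ?thesis by simp
qed

lemma graph_deg0:
  assumes "graph V E ends" "F \<subseteq> E" "v \<notin> V"
  shows "deg ends F v = 0"
proof -
  have "{e\<in>F. v \<in> ends e} = {}" using assms unfolding graph_def by auto
  then show ?thesis unfolding deg_def by (metis card.empty)
qed

lemma cs_iff:
  assumes "graph V E ends"
  shows "F \<in> cycle_space V E ends \<longleftrightarrow> F \<subseteq> E \<and> oddv ends F = {}"
proof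
  assume "F \<in> cycle_space V E ends"
  then have F: "F \<subseteq> E" "\<forall>v\<in>V. even (card {e\<in>F. v \<in> ends e})" unfolding cycle_space_def by auto
  have "oddv ends F = {}"
  proof (rule ccontr)
    assume "oddv ends F \<noteq> {}"
    then obtain v where v: "odd (deg ends F v)" unfolding oddv_def by auto
    show False
    proof (cases "v \<in> V")
      case True then show ?thesis using F v unfolding deg_def by auto
    next
      case False then show ?thesis using graph_deg0[OF assms F(1) False] v by simp
    qed
  qed
  then show "F \<subseteq> E \<and> oddv ends F = {}" using F by simp
next
  assume "F \<subseteq> E \<and> oddv ends F = {}"
  then show "F \<in> cycle_space V E ends" unfolding cycle_space_def oddv_def deg_def by auto
qed

lemma walk_conn:
  assumes E: "\<forall>i. ends (q i) = {p i, p (Suc i)}"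
  shows "connected_sg ends (p ` {s..s+L}, q ` {s..<s+L})"
  unfolding connected_sg_def fst_conv snd_conv
proof (intro conjI allI impI)
  show "p ` {s..s + L} \<noteq> {}" by auto
next
  fix X assume X: "X \<noteq> {} \<and> X \<subset> p ` {s..s + L}"
  obtain i where i: "i \<in> {s..s+L}" "p i \<in> X" using X by blast
  obtain j where j: "j \<in> {s..s+L}" "p j \<notin> X" using X by blast
  have "\<exists>k\<in>{s..<s+L}. (p k \<in> X) \<noteq> (p (Suc k) \<in> X)"
  proof (rule ccontr)
    assume "\<not> ?thesis"
    then have st: "\<forall>k\<in>{s..<s+L}. (p k \<in> X) = (p (Suc k) \<in> X)" by blast
    have all: "\<forall>m. m \<le> L \<longrightarrow> (p (s+m) \<in> X) = (p s \<in> X)"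
    proof
      fix m show "m \<le> L \<longrightarrow> (p (s+m) \<in> X) = (p s \<in> X)"
      proof (induction m)
        case 0 then show ?case by simp
      next
        case (Suc m)
        then show ?case using st[rule_format, of "s+m"] by auto
      qed
    qed
    have "(p i \<in> X) = (p s \<in> X)" using all[rule_format, of "i - s"] i(1) by auto
    moreover have "(p j \<in> X) = (p s \<in> X)" using all[rule_format, of "j - s"] j(1) by auto
    ultimately show False using i j by simp
  qed
  then obtain k where k: "k \<in> {s..<s+L}" "(p k \<in> X) \<noteq> (p (Suc k) \<in> X)" by blast
  show "\<exists>e\<in>q ` {s..<s + L}. ends e \<inter> X \<noteq> {} \<and> ends e - X \<noteq> {}"
    using k E by (intro bexI[of _ "q k"]) auto
qed

lemma walk_odd:
  assumes E: "\<forall>i. ends (q i) = {p i, p (Suc i)}"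
    and D: "\<forall>i. p i \<noteq> p (Suc i)"
  shows "inj_on q {s..<s+L} \<Longrightarrow> oddv ends (q ` {s..<s+L}) = xr {p s} {p (s+L)}"
proof (induction L)
  case 0 then show ?case by simp
next
  case (Suc L)
  have inj: "inj_on q {s..<s+L}" using Suc.prems by (rule inj_on_subset) auto
  have nin: "q (s+L) \<notin> q ` {s..<s+L}"
  proof
    assume "q (s+L) \<in> q ` {s..<s+L}"
    then obtain x where x: "x \<in> {s..<s+L}" "q (s+L) = q x" by auto
    then have "s + L = x" using inj_onD[OF Suc.prems x(2)] by simp
    then show False using x by simp
  qed
  have eq: "q ` {s..<s+Suc L} = xr (q ` {s..<s+L}) {q (s+L)}"
  proof -
    have "{s..<s + Suc L} = insert (s+L) {s..<s+L}" by auto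
    then show ?thesis using nin by (auto simp: xr_def)
  qed
  have "oddv ends (q ` {s..<s+Suc L}) = xr (oddv ends (q ` {s..<s+L})) (ends (q (s+L)))"
    unfolding eq by (simp add: oddv_xr oddv_single)
  also have "\<dots> = xr (xr {p s} {p (s+L)}) (xr {p (s+L)} {p (s + Suc L)})"
    using Suc.IH[OF inj] E D[rule_format, of "s+L"] by (simp add: xr_two)
  also have "\<dots> = xr {p s} {p (s + Suc L)}" unfolding xr_def by auto
  finally show ?case .
qed

lemma mod_add_cancel_nat: "((x::nat) + r) mod n = (y + r) mod n \<longleftrightarrow> x mod n = y mod n"
proof -
  have "int ((x+r) mod n) = int ((y+r) mod n) \<longleftrightarrow> int (x mod n) = int (y mod n)"
    by (simp add: zmod_int mod_eq_dvd_iff)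
  then show ?thesis by simp
qed

definition cyc_rep :: "('e \<Rightarrow> 'v set) \<Rightarrow> nat \<Rightarrow> (nat \<Rightarrow> 'v) \<Rightarrow> (nat \<Rightarrow> 'e) \<Rightarrow> bool" where
  "cyc_rep ends n p q \<longleftrightarrow> n \<ge> 2 \<and> (\<forall>x y. p x = p y \<longleftrightarrow> x mod n = y mod n)
     \<and> (\<forall>x y. q x = q y \<longleftrightarrow> x mod n = y mod n) \<and> (\<forall>i. ends (q i) = {p i, p (Suc i)})"

lemma mod_window:
  assumes "(n::nat) > 0"
  shows "\<exists>z. s \<le> z \<and> z < s + n \<and> z mod n = x mod n"
proof -
  define z where "z = s + ((x mod n + n - s mod n) mod n)"
  have "s \<le> z" "z < s + n" using assms by (auto simp: z_def)
  moreover have "z mod n = x mod n"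
  proof -
    have "z mod n = (s mod n + (x mod n + n - s mod n)) mod n"
      unfolding z_def by (simp only: mod_add_right_eq mod_add_left_eq)
    also have "s mod n + (x mod n + n - s mod n) = x mod n + n"
      using assms mod_less_divisor[of n s] by linarith
    finally show ?thesis by simp
  qed
  ultimately show ?thesis by blast
qed

lemma window_inj:
  assumes "(x::nat) mod n = y mod n" "s \<le> x" "x < s + n" "s \<le> y" "y < s + n"
  shows "x = y"
proof (cases "y \<le> x")
  case True
  then obtain k where "x = y + n * k" using assms(1) by (metis mod_eq_nat1E)
  then show ?thesis using assms by (cases k) auto
next
  case False
  then obtain k where "y = x + n * k" using assms(1) by (metis mod_eq_nat2E nat_le_linear)
  then show ?thesis using assms by (cases k) auto
qed

context
  fixes ends :: "'e \<Rightarrow> 'v set" and n :: nat and p :: "nat \<Rightarrow> 'v" and q :: "nat \<Rightarrow> 'e"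
  assumes cr: "cyc_rep ends n p q"
begin

lemma cr_n: "n \<ge> 2" using cr unfolding cyc_rep_def by simp
lemma cr_p: "p x = p y \<longleftrightarrow> x mod n = y mod n" using cr unfolding cyc_rep_def by simp
lemma cr_q: "q x = q y \<longleftrightarrow> x mod n = y mod n" using cr unfolding cyc_rep_def by simp
lemma cr_ends: "ends (q i) = {p i, p (Suc i)}" using cr unfolding cyc_rep_def by simp

lemma cr_pne: "p i \<noteq> p (Suc i)"
proof
  assume "p i = p (Suc i)"
  then have "i mod n = Suc i mod n" by (simp add: cr_p)
  then show False using cr_n by (simp add: mod_Suc split: if_splits)
qed

lemma cr_range_p: "range p = p ` {s..<s+n}"
proof
  show "range p \<subseteq> p ` {s..<s+n}"
  proof
    fix y assume "y \<in> range p"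
    then obtain x where x: "y = p x" by auto
    obtain z where "s \<le> z" "z < s + n" "z mod n = x mod n" using mod_window cr_n by (metis less_le_trans zero_less_numeral)
    then show "y \<in> p ` {s..<s+n}" using x cr_p by (intro image_eqI[of _ _ z]) auto
  qed
qed auto

lemma cr_range_q: "range q = q ` {s..<s+n}"
proof
  show "range q \<subseteq> q ` {s..<s+n}"
  proof
    fix y assume "y \<in> range q"
    then obtain x where x: "y = q x" by auto
    obtain z where "s \<le> z" "z < s + n" "z mod n = x mod n" using mod_window cr_n by (metis less_le_trans zero_less_numeral)
    then show "y \<in> q ` {s..<s+n}" using x cr_q by (intro image_eqI[of _ _ z]) auto
  qed
qed auto

lemma cr_inj_q: "t \<le> s + n \<Longrightarrow> inj_on q {s..<t}"
proof (rule inj_onI)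
  fix x y assume "t \<le> s + n" "x \<in> {s..<t}" "y \<in> {s..<t}" "q x = q y"
  then show "x = y" using window_inj[of x n y s] cr_q[of x y] by auto
qed

lemma cr_inj_p: "t \<le> s + n \<Longrightarrow> inj_on p {s..<t}"
proof (rule inj_onI)
  fix x y assume "t \<le> s + n" "x \<in> {s..<t}" "y \<in> {s..<t}" "p x = p y"
  then show "x = y" using window_inj[of x n y s] cr_p[of x y] by auto
qed

lemma cr_finite: "finite (range q)" "finite (range p)"
  using cr_range_q[of 0] cr_range_p[of 0] by auto

lemma cr_odd: "oddv ends (range q) = {}"
proof -
  have "oddv ends (q ` {0..<0+n}) = xr {p 0} {p (0+n)}"
    using walk_odd[of ends q p 0 n] cr_ends cr_pne cr_inj_q by blast
  moreover have "p (0+n) = p 0" using cr_p by simp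
  ultimately show ?thesis using cr_range_q[of 0] by simp
qed

lemma cr_conn: "connected_sg ends (range p, range q)"
proof -
  have "p ` {0..0+n} = range p"
  proof
    show "range p \<subseteq> p ` {0..0+n}" using cr_range_p[of 0] by auto
  qed auto
  then show ?thesis using walk_conn[of ends q p 0 n] cr_ends cr_range_q[of 0] by simp
qed

lemma cr_rot: "cyc_rep ends n (\<lambda>i. p (i + r)) (\<lambda>i. q (i + r))"
  unfolding cyc_rep_def
proof (intro conjI allI)
  show "n \<ge> 2" using cr_n .
  fix x y
  show "(p (x + r) = p (y + r)) = (x mod n = y mod n)" using cr_p mod_add_cancel_nat by metis
  show "(q (x + r) = q (y + r)) = (x mod n = y mod n)" using cr_q mod_add_cancel_nat by metis
next
  fix i show "ends (q (i + r)) = {p (i + r), p (Suc i + r)}" using cr_ends by simp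
qed

end

lemma cr_range_rot:
  assumes "cyc_rep ends n p q"
  shows "range (\<lambda>i. p (i + r)) = range p" "range (\<lambda>i. q (i + r)) = range q"
proof -
  show "range (\<lambda>i. p (i + r)) = range p"
  proof
    show "range p \<subseteq> range (\<lambda>i. p (i + r))"
    proof
      fix y assume "y \<in> range p"
      then obtain x where x: "x \<in> {r..<r+n}" "y = p x" using cr_range_p[OF assms, of r] by auto
      then have "y = p ((x - r) + r)" by simp
      then show "y \<in> range (\<lambda>i. p (i + r))" by blast
    qed
  qed auto
  show "range (\<lambda>i. q (i + r)) = range q"
  proof
    show "range q \<subseteq> range (\<lambda>i. q (i + r))"
    proof
      fix y assume "y \<in> range q"
      then obtain x where x: "x \<in> {r..<r+n}" "y = q x" using cr_range_q[OF assms, of r] by auto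
      then have "y = q ((x - r) + r)" by simp
      then show "y \<in> range (\<lambda>i. q (i + r))" by blast
    qed
  qed auto
qed

definition gpath :: "'e set \<Rightarrow> ('e \<Rightarrow> 'v set) \<Rightarrow> nat \<Rightarrow> (nat \<Rightarrow> 'v) \<Rightarrow> (nat \<Rightarrow> 'e) \<Rightarrow> bool" where
  "gpath F ends L p q \<longleftrightarrow> inj_on p {..L} \<and> (\<forall>i<L. q i \<in> F \<and> ends (q i) = {p i, p (Suc i)})"

lemma gpath_bound:
  assumes g: "graph V E ends" and F: "F \<subseteq> E" and P: "gpath F ends L p q" and L: "L \<ge> 1"
  shows "L \<le> card V"
proof -
  have sub: "p ` {..L} \<subseteq> V"
  proof
    fix y assume "y \<in> p ` {..L}"
    then obtain i where i: "i \<le> L" "y = p i" by auto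
    show "y \<in> V"
    proof (cases "i < L")
      case True
      then have "q i \<in> E" "p i \<in> ends (q i)" using P F unfolding gpath_def by auto
      then show ?thesis using g i unfolding graph_def by auto
    next
      case False
      then have "i = Suc (L - 1)" using i L by simp
      moreover have "q (L-1) \<in> E" "p (Suc (L - 1)) \<in> ends (q (L-1))" using P F L unfolding gpath_def by auto
      ultimately show ?thesis using g i unfolding graph_def by auto
    qed
  qed
  have "card (p ` {..L}) = Suc L" using P unfolding gpath_def by (simp add: card_image)
  moreover have "card (p ` {..L}) \<le> card V" using sub g unfolding graph_def by (simp add: card_mono)
  ultimately show ?thesis by simp
qed

lemma gpath_qinj:
  assumes P: "gpath F ends L p q" and a: "a < L" "b < L" "q a = q b"
  shows "a = b"
proof (rule ccontr)
  assume ne: "a \<noteq> b"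
  have inj: "inj_on p {..L}" using P unfolding gpath_def by simp
  have e: "{p a, p (Suc a)} = {p b, p (Suc b)}" using P a unfolding gpath_def by metis
  have peq: "\<And>x y. x \<le> L \<Longrightarrow> y \<le> L \<Longrightarrow> p x = p y \<longleftrightarrow> x = y"
    using inj by (simp add: inj_on_eq_iff)
  have "p a \<in> {p b, p (Suc b)}" using e by blast
  then have "p a = p (Suc b)" using peq[of a b] a ne by auto
  then have ab: "a = Suc b" using peq[of a "Suc b"] a by auto
  have "p (Suc a) \<in> {p b, p (Suc b)}" using e by blast
  then have "p (Suc a) = p b \<or> p (Suc a) = p (Suc b)" by simp
  then show False
  proof
    assume "p (Suc a) = p b" then have "Suc a = b" using peq[of "Suc a" b] a by auto
    then show False using ab by simp
  next
    assume "p (Suc a) = p (Suc b)" then have "Suc a = Suc b" using peq[of "Suc a" "Suc b"] a by auto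
    then show False using ne by simp
  qed
qed

lemma find_cycle:
  assumes g: "graph V E ends" and F: "F \<subseteq> E" "F \<noteq> {}" and d: "\<forall>v. deg ends F v \<noteq> 1"
  shows "\<exists>n p q. cyc_rep ends n p q \<and> range q \<subseteq> F"
proof -
  have finF: "finite F" using g F unfolding graph_def by (auto intro: finite_subset)
  define PP where "PP L \<longleftrightarrow> 1 \<le> L \<and> (\<exists>p q. gpath F ends L p q)" for L
  obtain f0 where f0: "f0 \<in> F" using F by auto
  have "card (ends f0) = 2" using g F f0 unfolding graph_def by auto
  then obtain u w where uw: "ends f0 = {u, w}" "u \<noteq> w" unfolding card_2_iff by blast
  have P1: "PP 1"
    unfolding PP_def gpath_def
  proof (intro conjI exI)
    show "inj_on (\<lambda>i::nat. if i = 0 then u else w) {..1}" using uw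
      by (auto simp: inj_on_def le_Suc_eq)
    show "\<forall>i<1. (\<lambda>_. f0) i \<in> F \<and> ends ((\<lambda>_. f0) i) = {if i = 0 then u else w, if Suc i = 0 then u else w}"
      using f0 uw by auto
  qed simp
  have bd: "\<forall>L. PP L \<longrightarrow> L \<le> card V"
  proof (intro allI impI)
    fix L assume "PP L"
    then obtain p q where pq: "gpath F ends L p q" "L \<ge> 1" unfolding PP_def by blast
    show "L \<le> card V" using gpath_bound[OF g F(1) pq] .
  qed
  obtain L where L: "PP L" and Lmax: "\<forall>L'. PP L' \<longrightarrow> L' \<le> L"
    using Nat.ex_has_greatest_nat[OF P1 bd] by blast
  then obtain p q where P: "gpath F ends L p q" and L1: "L \<ge> 1" unfolding PP_def by blast
  have inj: "inj_on p {..L}" using P unfolding gpath_def by simp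
  have peq: "\<And>x y. x \<le> L \<Longrightarrow> y \<le> L \<Longrightarrow> p x = p y \<longleftrightarrow> x = y"
    using inj by (simp add: inj_on_eq_iff)
  have "\<forall>i<L. q i \<in> F \<and> ends (q i) = {p i, p (Suc i)}" using P unfolding gpath_def by simp
  then have "q 0 \<in> F \<and> ends (q 0) = {p 0, p (Suc 0)}" using L1 by simp
  then have q0: "q 0 \<in> F" "p 0 \<in> ends (q 0)" by auto
  obtain f where f: "f \<in> F" "p 0 \<in> ends f" "f \<noteq> q 0"
  proof -
    let ?S = "{e\<in>F. p 0 \<in> ends e}"
    have "?S \<noteq> {}" using q0 by blast
    then have "card ?S \<noteq> 0" using finF by simp
    moreover have "card ?S \<noteq> 1" using d unfolding deg_def by blast
    ultimately have "\<not> ?S \<subseteq> {q 0}"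
    proof -
      assume c: "card ?S \<noteq> 0" "card ?S \<noteq> 1"
      show ?thesis
      proof
        assume "?S \<subseteq> {q 0}"
        then have "?S = {} \<or> ?S = {q 0}" by (rule subset_singletonD)
        then show False
        proof
          assume "?S = {}" then show False using c(1) by (metis card.empty)
        next
          assume "?S = {q 0}" then show False using c(2) card_1_singleton_iff by (metis One_nat_def)
        qed
      qed
    qed
    then show ?thesis using that by blast
  qed
  obtain x where x: "ends f = {p 0, x}" "x \<noteq> p 0"
  proof -
    have "card (ends f) = 2" using g F f unfolding graph_def by auto
    then obtain a b where ab: "ends f = {a, b}" "a \<noteq> b" unfolding card_2_iff by blast
    show ?thesis
    proof (cases "p 0 = a")
      case True then show ?thesis using that[of b] ab by simp
    next
      case False then have "p 0 = b" using f(2) ab by auto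
      then show ?thesis using that[of a] ab by (simp add: insert_commute)
    qed
  qed
  show ?thesis
  proof (cases "x \<in> p ` {..L}")
    case False
    define p' where "p' i = (if i = 0 then x else p (i - 1))" for i
    define q' where "q' i = (if i = 0 then f else q (i - 1))" for i
    have "gpath F ends (Suc L) p' q'"
      unfolding gpath_def
    proof (intro conjI allI impI)
      show "inj_on p' {..Suc L}"
      proof (rule inj_onI)
        fix i j assume ij: "i \<in> {..Suc L}" "j \<in> {..Suc L}" "p' i = p' j"
        show "i = j"
        proof (cases "i = 0"; cases "j = 0")
          assume nz: "i \<noteq> 0" "j \<noteq> 0"
          then have "p (i-1) = p (j-1)" using ij unfolding p'_def by simp
          then have "i-1 = j-1" using peq[of "i-1" "j-1"] ij by auto
          then show ?thesis using nz by simp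
        next
          assume "i = 0" "j \<noteq> 0"
          then show ?thesis using ij False unfolding p'_def by auto
        next
          assume "i \<noteq> 0" "j = 0"
          then show ?thesis using ij False unfolding p'_def by (auto simp: image_iff)
        qed simp
      qed
    next
      fix i assume i: "i < Suc L"
      show "q' i \<in> F" using i f P unfolding q'_def gpath_def by auto
      show "ends (q' i) = {p' i, p' (Suc i)}"
      proof (cases "i = 0")
        case True then show ?thesis using x unfolding p'_def q'_def by auto
      next
        case False
        then have "ends (q (i-1)) = {p (i-1), p (Suc (i-1))}" using i P unfolding gpath_def by auto
        then show ?thesis using False unfolding p'_def q'_def by simp
      qed
    qed
    then have "PP (Suc L)" unfolding PP_def by auto
    then have "Suc L \<le> L" using Lmax by blast
    then show ?thesis by simp
  next
    case True
    then obtain j where j: "j \<le> L" "x = p j" by auto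
    have j0: "j \<noteq> 0" using x j by (metis)
    define n where "n = Suc j"
    define P' where "P' i = p (i mod n)" for i
    define Q' where "Q' i = (if i mod n = j then f else q (i mod n))" for i
    have modle: "\<And>i. i mod n \<le> j" unfolding n_def using less_Suc_eq_le by auto
    have qinj: "\<And>a b. a < L \<Longrightarrow> b < L \<Longrightarrow> q a = q b \<Longrightarrow> a = b" using gpath_qinj[OF P] by blast
    have fq: "\<And>k. k < j \<Longrightarrow> f \<noteq> q k"
    proof
      fix k assume k: "k < j" "f = q k"
      show False
      proof (cases "k = 0")
        case True then show ?thesis using k f by simp
      next
        case False
        have "ends (q k) = {p k, p (Suc k)}" using P k j unfolding gpath_def by auto
        then have "p 0 = p k \<or> p 0 = p (Suc k)" using f k by auto
        then show ?thesis using peq[of 0 k] peq[of 0 "Suc k"] k j False by auto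
      qed
    qed
    have "cyc_rep ends n P' Q'"
      unfolding cyc_rep_def
    proof (intro conjI allI)
      show "2 \<le> n" using j0 unfolding n_def by simp
    next
      fix a b
      show "(P' a = P' b) = (a mod n = b mod n)"
        unfolding P'_def using peq[of "a mod n" "b mod n"] modle j by (meson le_trans)
    next
      fix a b
      show "(Q' a = Q' b) = (a mod n = b mod n)"
      proof
        assume Q: "Q' a = Q' b"
        have la: "a mod n \<le> j" "b mod n \<le> j" using modle by auto
        show "a mod n = b mod n"
        proof (cases "a mod n = j"; cases "b mod n = j")
          assume "a mod n = j" "b mod n \<noteq> j"
          then show ?thesis using Q fq[of "b mod n"] la unfolding Q'_def by auto
        next
          assume "a mod n \<noteq> j" "b mod n = j"
          then show ?thesis using Q fq[of "a mod n"] la unfolding Q'_def by auto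
        next
          assume "a mod n \<noteq> j" "b mod n \<noteq> j"
          then show ?thesis using Q qinj[of "a mod n" "b mod n"] la j unfolding Q'_def by auto
        qed simp
      next
        assume "a mod n = b mod n" then show "Q' a = Q' b" unfolding Q'_def by simp
      qed
    next
      fix i
      show "ends (Q' i) = {P' i, P' (Suc i)}"
      proof (cases "i mod n = j")
        case True
        then have "Suc i mod n = 0" unfolding n_def by (simp add: mod_Suc)
        then show ?thesis using True x j unfolding P'_def Q'_def by auto
      next
        case False
        then have lt: "i mod n < j" using modle le_neq_implies_less by blast
        then have "Suc i mod n = Suc (i mod n)" unfolding n_def by (simp add: mod_Suc)
        moreover have "ends (q (i mod n)) = {p (i mod n), p (Suc (i mod n))}"
          using P lt j unfolding gpath_def by auto
        ultimately show ?thesis using False unfolding P'_def Q'_def by simp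
      qed
    qed
    moreover have "range Q' \<subseteq> F"
    proof
      fix y assume "y \<in> range Q'"
      then obtain i where i: "y = Q' i" by auto
      show "y \<in> F"
      proof (cases "i mod n = j")
        case True then show ?thesis using i f unfolding Q'_def by simp
      next
        case False
        then have "i mod n < L" using modle j le_neq_implies_less using modle[of i] by linarith
        then show ?thesis using i P False unfolding Q'_def gpath_def by auto
      qed
    qed
    ultimately show ?thesis by blast
  qed
qed

lemma tjoin:
  assumes conn: "connected_sg ends S" and finE: "finite (snd S)"
    and e2: "\<forall>e\<in>snd S. ends e \<subseteq> fst S \<and> card (ends e) = 2"
    and xy: "x \<in> fst S" "y \<in> fst S"
  shows "\<exists>Q\<subseteq>snd S. oddv ends Q = xr {x} {y}"
proof -
  define R where "R = {z\<in>fst S. \<exists>Q\<subseteq>snd S. oddv ends Q = xr {x} {z}}"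
  have xR: "x \<in> R" unfolding R_def using xy by (intro CollectI conjI exI[of _ "{}"]) auto
  have "R = fst S"
  proof (rule ccontr)
    assume ne: "R \<noteq> fst S"
    have "R \<subset> fst S" using ne unfolding R_def by auto
    moreover have "R \<noteq> {}" using xR by auto
    ultimately obtain f where f: "f \<in> snd S" "ends f \<inter> R \<noteq> {}" "ends f - R \<noteq> {}"
      using conn unfolding connected_sg_def by blast
    obtain z where z: "z \<in> ends f" "z \<in> R" using f by auto
    obtain z' where z': "z' \<in> ends f" "z' \<notin> R" using f by auto
    have zz: "z \<noteq> z'" using z z' by auto
    have c2: "card (ends f) = 2" using e2 f by auto
    have ef: "ends f = {z, z'}"
    proof -
      obtain a b where ab: "ends f = {a, b}" "a \<noteq> b" using c2 unfolding card_2_iff by blast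
      then show ?thesis using z z' zz by auto
    qed
    obtain Q where Q: "Q \<subseteq> snd S" "oddv ends Q = xr {x} {z}" using z unfolding R_def by auto
    have finQ: "finite Q" using Q finE by (auto intro: finite_subset)
    have "oddv ends (xr Q {f}) = xr (xr {x} {z}) (ends f)"
      using finQ Q by (simp add: oddv_xr oddv_single)
    also have "\<dots> = xr {x} {z'}" unfolding ef xr_def using zz by auto
    finally have "z' \<in> R" unfolding R_def using Q f e2 z'
      by (intro CollectI conjI exI[of _ "xr Q {f}"]) (auto simp: xr_def)
    then show False using z' by simp
  qed
  then show ?thesis using xy unfolding R_def by auto
qed

definition spanW :: "'e set set \<Rightarrow> 'e set set" where
  "spanW Cyc = {sym_sum DD | DD. finite DD \<and> DD \<subseteq> Cyc}"

lemma sym_sum_xr: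
  assumes "finite A" "finite B"
  shows "sym_sum (xr A B) = xr (sym_sum A) (sym_sum B)"
proof -
  have "\<And>e. {D\<in>xr A B. e \<in> D} = xr {D\<in>A. e \<in> D} {D\<in>B. e \<in> D}" unfolding xr_def by auto
  then have "\<And>e. odd (card {D\<in>xr A B. e \<in> D}) \<longleftrightarrow> (odd (card {D\<in>A. e \<in> D}) \<noteq> odd (card {D\<in>B. e \<in> D}))"
    using assms by (simp add: even_card_xr)
  then show ?thesis unfolding sym_sum_def xr_def by auto
qed

lemma sym_sum_empty: "sym_sum {} = {}" unfolding sym_sum_def by simp

lemma sym_sum_single: "sym_sum {X} = X"
proof -
  have "\<And>e. {D\<in>{X}. e \<in> D} = (if e \<in> X then {X} else {})" by auto
  then show ?thesis unfolding sym_sum_def by auto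
qed

lemma spanW_empty: "{} \<in> spanW Cyc"
  unfolding spanW_def using sym_sum_empty by (metis (mono_tags, lifting) empty_subsetI finite.emptyI mem_Collect_eq)

lemma spanW_gen: "X \<in> Cyc \<Longrightarrow> X \<in> spanW Cyc"
  unfolding spanW_def using sym_sum_single by (metis (mono_tags, lifting) empty_subsetI finite.emptyI finite.insertI insert_subset mem_Collect_eq)

lemma spanW_xr: "X \<in> spanW Cyc \<Longrightarrow> Y \<in> spanW Cyc \<Longrightarrow> xr X Y \<in> spanW Cyc"
proof -
  assume "X \<in> spanW Cyc" "Y \<in> spanW Cyc"
  then obtain A B where AB: "X = sym_sum A" "finite A" "A \<subseteq> Cyc" "Y = sym_sum B" "finite B" "B \<subseteq> Cyc"
    unfolding spanW_def by blast
  then have "xr X Y = sym_sum (xr A B)" by (simp add: sym_sum_xr)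
  moreover have "finite (xr A B)" "xr A B \<subseteq> Cyc" using AB by (auto simp: xr_def)
  ultimately show ?thesis unfolding spanW_def by blast
qed

lemma spanW_sub:
  assumes cs: "\<And>X. X \<in> Cyc \<Longrightarrow> X \<in> CS" and e: "{} \<in> CS" and x: "\<And>X Y. X \<in> CS \<Longrightarrow> Y \<in> CS \<Longrightarrow> xr X Y \<in> CS"
  shows "spanW Cyc \<subseteq> CS"
proof
  fix Z assume "Z \<in> spanW Cyc"
  then obtain DD where DD: "Z = sym_sum DD" "finite DD" "DD \<subseteq> Cyc" unfolding spanW_def by blast
  have "finite DD \<Longrightarrow> DD \<subseteq> Cyc \<Longrightarrow> sym_sum DD \<in> CS"
  proof (induction DD rule: finite_induct)
    case empty then show ?case using e unfolding sym_sum_def by simp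
  next
    case (insert X DD)
    have "insert X DD = xr {X} DD" using insert(2) unfolding xr_def by auto
    then have "sym_sum (insert X DD) = xr X (sym_sum DD)"
      using insert(1) by (simp add: sym_sum_xr sym_sum_single)
    then show ?case using insert x cs by simp
  qed
  then show "Z \<in> CS" using DD by simp
qed

lemma sd_le:
  assumes "subgraph (fst H) (snd H) ends S" "connected_sg ends S" "A \<subseteq> fst S"
  shows "sd ends len H A \<le> ereal (edge_length len (snd S))"
  unfolding sd_def by (rule Inf_lower) (use assms in blast)

lemma sd_mono:
  assumes "subgraph V E ends H"
  shows "sd ends len (V, E) A \<le> sd ends len H A"
  unfolding sd_def
proof (rule Inf_superset_mono)
  show "{ereal (edge_length len (snd S)) |S. subgraph (fst H) (snd H) ends S \<and> connected_sg ends S \<and> A \<subseteq> fst S}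
    \<subseteq> {ereal (edge_length len (snd S)) |S. subgraph (fst (V, E)) (snd (V, E)) ends S \<and> connected_sg ends S \<and> A \<subseteq> fst S}"
  proof
    fix x assume "x \<in> {ereal (edge_length len (snd S)) |S. subgraph (fst H) (snd H) ends S \<and> connected_sg ends S \<and> A \<subseteq> fst S}"
    then obtain S where S: "x = ereal (edge_length len (snd S))" "subgraph (fst H) (snd H) ends S" "connected_sg ends S" "A \<subseteq> fst S" by blast
    then have "subgraph (fst (V, E)) (snd (V, E)) ends S" using assms unfolding subgraph_def by auto
    then show "x \<in> {ereal (edge_length len (snd S)) |S. subgraph (fst (V, E)) (snd (V, E)) ends S \<and> connected_sg ends S \<and> A \<subseteq> fst S}"
      using S by blast
  qed
qed

lemma sd_lessE:
  assumes "sd ends len H A < c"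
  shows "\<exists>S. subgraph (fst H) (snd H) ends S \<and> connected_sg ends S \<and> A \<subseteq> fst S \<and> ereal (edge_length len (snd S)) < c"
  using assms unfolding sd_def Inf_less_iff by blast

lemma is_cycle_cs:
  assumes g: "graph V E ends" and C: "is_cycle V E ends C"
  shows "snd C \<in> cycle_space V E ends"
proof -
  have sub: "snd C \<subseteq> E" "\<forall>e\<in>snd C. ends e \<subseteq> fst C" using C unfolding is_cycle_def subgraph_def by auto
  have "oddv ends (snd C) = {}"
  proof -
    have "\<And>v. even (deg ends (snd C) v)"
    proof -
      fix v show "even (deg ends (snd C) v)"
      proof (cases "v \<in> fst C")
        case True then show ?thesis using C unfolding is_cycle_def deg_def by auto
      next
        case False
        then have "{e\<in>snd C. v \<in> ends e} = {}" using sub by auto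
        then show ?thesis unfolding deg_def by (metis card.empty even_zero)
      qed
    qed
    then show ?thesis unfolding oddv_def by auto
  qed
  then show ?thesis using cs_iff[OF g] sub by simp
qed

lemma cr_qne:
  assumes "cyc_rep ends n p q" shows "q i \<noteq> q (Suc i)"
proof
  assume "q i = q (Suc i)"
  then have "i mod n = Suc i mod n" by (simp add: cr_q[OF assms])
  then show False using cr_n[OF assms] by (simp add: mod_Suc split: if_splits)
qed

lemma cr_is_cycle:
  assumes g: "graph V E ends" and cr: "cyc_rep ends n p q" and qE: "range q \<subseteq> E"
  shows "is_cycle V E ends (range p, range q)"
  unfolding is_cycle_def fst_conv snd_conv
proof (intro conjI ballI)
  have pV: "range p \<subseteq> V"
  proof
    fix v assume "v \<in> range p"
    then obtain i where "v = p i" by auto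
    then have "v \<in> ends (q i)" using cr_ends[OF cr] by simp
    moreover have "q i \<in> E" using qE by auto
    ultimately show "v \<in> V" using g unfolding graph_def by auto
  qed
  show "subgraph V E ends (range p, range q)"
    unfolding subgraph_def using pV qE cr_ends[OF cr] by auto
  show "connected_sg ends (range p, range q)" using cr_conn[OF cr] .
next
  fix v assume "v \<in> range p"
  then obtain i where i: "i \<in> {1..<1+n}" "v = p i" using cr_range_p[OF cr, of 1] by auto
  define k where "k = i - 1"
  have ik: "i = Suc k" using i unfolding k_def by auto
  have "{e \<in> range q. v \<in> ends e} = {q k, q i}"
  proof
    show "{q k, q i} \<subseteq> {e \<in> range q. v \<in> ends e}" using cr_ends[OF cr] i ik by auto
    show "{e \<in> range q. v \<in> ends e} \<subseteq> {q k, q i}"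
    proof
      fix e assume "e \<in> {e \<in> range q. v \<in> ends e}"
      then obtain m where m: "e = q m" "v \<in> ends (q m)" by auto
      then have "p i = p m \<or> p i = p (Suc m)" using cr_ends[OF cr] i by auto
      then show "e \<in> {q k, q i}"
      proof
        assume "p i = p m" then have "q i = q m" by (simp add: cr_p[OF cr] cr_q[OF cr])
        then show ?thesis using m by simp
      next
        assume "p i = p (Suc m)"
        then have "(k + 1) mod n = (m + 1) mod n" using ik by (simp add: cr_p[OF cr])
        then have "k mod n = m mod n" using mod_add_cancel_nat by blast
        then have "q k = q m" by (simp add: cr_q[OF cr])
        then show ?thesis using m by simp
      qed
    qed
  qed
  moreover have "q k \<noteq> q i" using cr_qne[OF cr, of k] ik by simp
  ultimately show "card {e \<in> range q. v \<in> ends e} = 2" by simp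
qed

lemma arc_main:
  assumes g: "graph V E ends" and pos: "\<forall>e\<in>E. len e > 0"
    and cr: "cyc_rep ends n p q" and qE: "range q \<subseteq> E"
    and Wx: "\<And>X Y. X \<in> W \<Longrightarrow> Y \<in> W \<Longrightarrow> xr X Y \<in> W"
    and small: "\<And>F'. F' \<subseteq> E \<Longrightarrow> oddv ends F' = {} \<Longrightarrow> edge_length len F' < edge_length len (range q) \<Longrightarrow> F' \<in> W"
    and p0: "p 0 \<in> A" and Ap: "A \<subseteq> range p"
    and Sc: "connected_sg ends S" and Ssub: "subgraph V E ends S" and AS: "A \<subseteq> fst S"
    and short: "\<And>S'. subgraph (range p) (range q) ends S' \<Longrightarrow> connected_sg ends S' \<Longrightarrow> A \<subseteq> fst S'
        \<Longrightarrow> edge_length len (snd S) < edge_length len (snd S')"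
  shows "range q \<in> W"
proof -
  let ?D = "range q"
  let ?l = "edge_length len"
  have finE: "finite E" using g unfolding graph_def by simp
  have SE: "snd S \<subseteq> E" "fst S \<subseteq> V" using Ssub unfolding subgraph_def by auto
  have finS: "finite (snd S)" using SE finE by (auto intro: finite_subset)
  have e2S: "\<forall>e\<in>snd S. ends e \<subseteq> fst S \<and> card (ends e) = 2"
    using Ssub g SE unfolding subgraph_def graph_def by auto
  have Sle: "\<And>Q. Q \<subseteq> snd S \<Longrightarrow> ?l Q \<le> ?l (snd S)"
    using el_mono[OF pos finS SE(1)] .
  have lenwin: "\<And>a b. b \<le> a + n \<Longrightarrow> ?l (q ` {a..<b}) = (\<Sum>i\<in>{a..<b}. len (q i))"
    unfolding edge_length_def using cr_inj_q[OF cr] by (simp add: sum.reindex)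
  have Dwin: "\<And>s. ?D = q ` {s..<s+n}" using cr_range_q[OF cr] by blast
  have SD: "?l (snd S) < ?l ?D"
    using short[of "(range p, range q)"] cr_conn[OF cr] Ap cr_ends[OF cr]
    unfolding subgraph_def by auto
  have arc: "\<And>s e. s < e \<Longrightarrow> e \<le> n \<Longrightarrow> (\<forall>i. s < i \<and> i < e \<longrightarrow> p i \<notin> A)
      \<Longrightarrow> ?l (q ` {s..<e}) + ?l (snd S) < ?l ?D"
  proof -
    fix s e assume se: "s < e" "e \<le> n" and noA: "\<forall>i. s < i \<and> i < e \<longrightarrow> p i \<notin> A"
    define L where "L = s + n - e"
    have eL: "e + L = s + n" unfolding L_def using se by simp
    let ?S' = "(p ` {e..e+L}, q ` {e..<e+L})"
    have conn: "connected_sg ends ?S'" using walk_conn[of ends q p e L] cr_ends[OF cr] by blast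
    have sub: "subgraph (range p) (range q) ends ?S'"
      unfolding subgraph_def fst_conv snd_conv
    proof (intro conjI ballI)
      fix x assume "x \<in> q ` {e..<e+L}"
      then obtain i where i: "i \<in> {e..<e+L}" "x = q i" by auto
      then show "ends x \<subseteq> p ` {e..e+L}" using cr_ends[OF cr] by auto
    qed auto
    have A': "A \<subseteq> fst ?S'"
    proof
      fix a assume a: "a \<in> A"
      then obtain i where i: "i \<in> {0..<0+n}" "a = p i" using Ap cr_range_p[OF cr, of 0] by auto
      show "a \<in> fst ?S'"
      proof (cases "i \<le> s")
        case True
        have "p (i + n) = p i" using cr_p[OF cr] by simp
        moreover have "i + n \<in> {e..e+L}" using True eL se by auto
        ultimately show ?thesis using i by (auto intro: image_eqI[of _ _ "i+n"])
      next
        case False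
        then have "\<not> i < e" using noA a i by auto
        then have "i \<in> {e..e+L}" using i eL by auto
        then show ?thesis using i by auto
      qed
    qed
    have "?l (snd S) < ?l (q ` {e..<e+L})" using short[OF sub conn A'] by simp
    moreover have "?l (q ` {s..<e}) + ?l (q ` {e..<e+L}) = ?l ?D"
    proof -
      have "?l (q ` {s..<e}) = (\<Sum>i\<in>{s..<e}. len (q i))" using lenwin se by simp
      moreover have "?l (q ` {e..<e+L}) = (\<Sum>i\<in>{e..<e+L}. len (q i))" using lenwin eL se by simp
      moreover have "?l ?D = (\<Sum>i\<in>{s..<s+n}. len (q i))" using lenwin Dwin[of s] by simp
      ultimately show ?thesis using eL se sum.atLeastLessThan_concat[of s e "s+n" "\<lambda>i. len (q i)"] by simp
    qed
    ultimately show "?l (q ` {s..<e}) + ?l (snd S) < ?l ?D" by simp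
  qed
  have arcW: "\<And>s e. s < e \<Longrightarrow> e \<le> n \<Longrightarrow> (\<forall>i. s < i \<and> i < e \<longrightarrow> p i \<notin> A) \<Longrightarrow> p s \<in> A \<Longrightarrow> p e \<in> A
      \<Longrightarrow> \<exists>Q\<subseteq>snd S. oddv ends Q = xr {p s} {p e} \<and> xr (q ` {s..<e}) Q \<in> W"
  proof -
    fix s e assume se: "s < e" "e \<le> n" and noA: "\<forall>i. s < i \<and> i < e \<longrightarrow> p i \<notin> A"
      and ps: "p s \<in> A" and pe: "p e \<in> A"
    obtain Q where Q: "Q \<subseteq> snd S" "oddv ends Q = xr {p s} {p e}"
      using tjoin[OF Sc finS e2S, of "p s" "p e"] ps pe AS by blast
    have finQ: "finite Q" using Q finS by (auto intro: finite_subset)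
    have "inj_on q {s..<s + (e - s)}" using cr_inj_q[OF cr] se by simp
    then have "oddv ends (q ` {s..<s + (e - s)}) = xr {p s} {p (s + (e - s))}"
      using walk_odd[of ends q p s "e - s"] cr_ends[OF cr] cr_pne[OF cr] by blast
    then have oP: "oddv ends (q ` {s..<e}) = xr {p s} {p e}" using se by simp
    let ?P = "xr (q ` {s..<e}) Q"
    have "?P \<subseteq> E" using Q SE qE by (auto simp: xr_def)
    moreover have "oddv ends ?P = {}" using oP Q finQ by (simp add: oddv_xr)
    moreover have "?l ?P < ?l ?D"
    proof -
      have "?l ?P \<le> ?l (q ` {s..<e}) + ?l Q"
      proof -
        have "q ` {s..<e} \<subseteq> E" "Q \<subseteq> E" using qE Q SE by auto
        then show ?thesis using el_xr[OF pos, of "q ` {s..<e}" Q] finQ by simp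
      qed
      also have "\<dots> \<le> ?l (q ` {s..<e}) + ?l (snd S)" using Sle Q by simp
      also have "\<dots> < ?l ?D" using arc[OF se noA] .
      finally show ?thesis .
    qed
    ultimately have "?P \<in> W" using small by blast
    then show "\<exists>Q\<subseteq>snd S. oddv ends Q = xr {p s} {p e} \<and> xr (q ` {s..<e}) Q \<in> W" using Q by blast
  qed
  have Dpos: "?l ?D > 0"
  proof -
    have "?l {} < ?l ?D" using el_strict[OF pos _ qE, of "{}"] cr_finite[OF cr] by auto
    then show ?thesis by (simp add: edge_length_def)
  qed
  have W0: "{} \<in> W" using small[of "{}"] Dpos by (simp add: edge_length_def)
  define Inv where "Inv t \<longleftrightarrow> (\<exists>s\<le>t. p s \<in> A \<and> (\<forall>i. s < i \<and> i \<le> t \<longrightarrow> p i \<notin> A) \<and>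
      (\<exists>J\<subseteq>snd S. oddv ends J = xr {p 0} {p s} \<and> xr (q ` {0..<s}) J \<in> W))" for t
  have inv: "t \<le> n \<Longrightarrow> Inv t" for t
  proof (induction t)
    case 0
    have "xr (q ` {0..<0}) {} \<in> W" using W0 by simp
    moreover have "oddv ends {} = xr {p 0} {p 0}" by simp
    ultimately show ?case unfolding Inv_def using p0 by blast
  next
    case (Suc t)
    then have "Inv t" by simp
    then obtain s J where s: "s \<le> t" "p s \<in> A" "\<forall>i. s < i \<and> i \<le> t \<longrightarrow> p i \<notin> A"
      and J: "J \<subseteq> snd S" "oddv ends J = xr {p 0} {p s}" "xr (q ` {0..<s}) J \<in> W"
      unfolding Inv_def by blast
    show ?case
    proof (cases "p (Suc t) \<in> A")
      case False
      have "\<forall>i. s < i \<and> i \<le> Suc t \<longrightarrow> p i \<notin> A"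
        using s(3) False by (metis le_Suc_eq)
      moreover have "s \<le> Suc t" using s(1) by simp
      ultimately show ?thesis unfolding Inv_def using s(2) J by blast
    next
      case True
      have noA: "\<forall>i. s < i \<and> i < Suc t \<longrightarrow> p i \<notin> A" using s(3) by auto
      have st: "s < Suc t" "Suc t \<le> n" using s(1) Suc.prems by auto
      obtain Q where Q: "Q \<subseteq> snd S" "oddv ends Q = xr {p s} {p (Suc t)}" "xr (q ` {s..<Suc t}) Q \<in> W"
        using arcW[OF st noA s(2) True] by blast
      have disj: "q ` {0..<s} \<inter> q ` {s..<Suc t} = {}"
      proof -
        have "inj_on q {0..<Suc t}" using cr_inj_q[OF cr] Suc.prems by simp
        then show ?thesis using s(1) by (subst inj_on_image_Int[symmetric, of q "{0..<Suc t}"]) auto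
      qed
      have un: "q ` {0..<Suc t} = q ` {0..<s} \<union> q ` {s..<Suc t}"
      proof -
        have "{0..<Suc t} = {0..<s} \<union> {s..<Suc t}" using s by auto
        then show ?thesis by auto
      qed
      have "xr (q ` {0..<Suc t}) (xr J Q) = xr (xr (q ` {0..<s}) J) (xr (q ` {s..<Suc t}) Q)"
        unfolding un xr_disj[OF disj, symmetric] by (simp add: xr_assoc xr_comm xr_lcomm)
      then have "xr (q ` {0..<Suc t}) (xr J Q) \<in> W" using Wx J(3) Q(3) by simp
      moreover have "xr J Q \<subseteq> snd S" using J Q by (auto simp: xr_def)
      moreover have "oddv ends (xr J Q) = xr {p 0} {p (Suc t)}"
      proof -
        have "finite J" "finite Q" using J Q finS by (auto intro: finite_subset)
        then have "oddv ends (xr J Q) = xr (xr {p 0} {p s}) (xr {p s} {p (Suc t)})"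
          using J Q by (simp add: oddv_xr)
        also have "\<dots> = xr {p 0} {p (Suc t)}" unfolding xr_def by auto
        finally show ?thesis .
      qed
      moreover have "\<forall>i. Suc t < i \<and> i \<le> Suc t \<longrightarrow> p i \<notin> A" by auto
      ultimately show ?thesis unfolding Inv_def using True by blast
    qed
  qed
  obtain s J where s: "s \<le> n" "p s \<in> A" "\<forall>i. s < i \<and> i \<le> n \<longrightarrow> p i \<notin> A"
    and J: "J \<subseteq> snd S" "oddv ends J = xr {p 0} {p s}" "xr (q ` {0..<s}) J \<in> W"
    using inv[of n] unfolding Inv_def by blast
  have pn: "p n = p 0" using cr_p[OF cr] by simp
  have sn: "s = n" using s pn p0 by (metis le_neq_implies_less order_refl)
  have "J \<in> W"
  proof (rule small)
    show "J \<subseteq> E" using J SE by auto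
    show "oddv ends J = {}" using J sn pn by simp
    show "?l J < ?l ?D" using Sle[OF J(1)] SD by simp
  qed
  moreover have "xr ?D J \<in> W" using J(3) sn Dwin[of 0] by simp
  ultimately have "xr (xr ?D J) J \<in> W" using Wx by blast
  then show ?thesis by (simp add: xr_cancel)
qed

theorem proposition7p1:
  fixes V :: "'v set" and E :: "'e set" and ends :: "'e \<Rightarrow> 'v set" and len :: "'e \<Rightarrow> real"
  assumes "graph V E ends"
    and "\<forall>e\<in>E. len e > 0"
  shows "cycle_space V E ends =
    {sym_sum DD | DD. finite DD \<and>
       DD \<subseteq> {snd C | C. is_cycle V E ends C \<and> fully_geodesic V E ends len C}}"
proof -
  note g = assms(1) and pos = assms(2)
  define Cyc where "Cyc = {snd C | C. is_cycle V E ends C \<and> fully_geodesic V E ends len C}"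
  let ?l = "edge_length len"
  have finE: "finite E" using g unfolding graph_def by simp
  have csxr: "\<And>X Y. X \<in> cycle_space V E ends \<Longrightarrow> Y \<in> cycle_space V E ends \<Longrightarrow> xr X Y \<in> cycle_space V E ends"
  proof -
    fix X Y assume "X \<in> cycle_space V E ends" "Y \<in> cycle_space V E ends"
    then have XY: "X \<subseteq> E" "Y \<subseteq> E" "oddv ends X = {}" "oddv ends Y = {}" using cs_iff[OF g] by auto
    then have "finite X" "finite Y" using finE by (auto intro: finite_subset)
    then show "xr X Y \<in> cycle_space V E ends" using XY cs_iff[OF g] xr_sub[OF XY(1,2)] by (simp add: oddv_xr)
  qed
  have cs0: "{} \<in> cycle_space V E ends" using cs_iff[OF g] by simp
  have sup: "spanW Cyc \<subseteq> cycle_space V E ends"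
  proof (rule spanW_sub)
    fix X assume "X \<in> Cyc"
    then obtain C where "X = snd C" "is_cycle V E ends C" unfolding Cyc_def by blast
    then show "X \<in> cycle_space V E ends" using is_cycle_cs[OF g] by simp
  qed (use cs0 csxr in auto)
  have sub: "cycle_space V E ends \<subseteq> spanW Cyc"
  proof (rule ccontr)
    assume nt: "\<not> cycle_space V E ends \<subseteq> spanW Cyc"
    define Bad where "Bad = {F \<in> cycle_space V E ends. F \<notin> spanW Cyc}"
    have Bne: "Bad \<noteq> {}" using nt unfolding Bad_def by auto
    have Bfin: "finite Bad"
    proof (rule finite_subset)
      show "Bad \<subseteq> Pow E" unfolding Bad_def cycle_space_def by auto
    qed (use finE in simp)
    define m where "m = Min (?l ` Bad)"
    have "m \<in> ?l ` Bad" unfolding m_def using Bne Bfin by (intro Min_in) auto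
    then obtain F where FB: "F \<in> Bad" and Fm: "?l F = m" by auto
    have Fmin: "\<And>G. G \<in> Bad \<Longrightarrow> ?l F \<le> ?l G" unfolding Fm m_def using Bfin by (intro Min_le) auto
    have Fcs: "F \<subseteq> E" "oddv ends F = {}" using FB cs_iff[OF g] unfolding Bad_def by auto
    have FnW: "F \<notin> spanW Cyc" using FB unfolding Bad_def by auto
    have finF: "finite F" using Fcs finE by (auto intro: finite_subset)
    have small: "\<And>G. G \<subseteq> E \<Longrightarrow> oddv ends G = {} \<Longrightarrow> ?l G < ?l F \<Longrightarrow> G \<in> spanW Cyc"
    proof (rule ccontr)
      fix G assume G: "G \<subseteq> E" "oddv ends G = {}" "?l G < ?l F" "G \<notin> spanW Cyc"
      then have "G \<in> Bad" unfolding Bad_def using cs_iff[OF g] by auto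
      then show False using Fmin G by force
    qed
    have Fne: "F \<noteq> {}" using FnW spanW_empty by auto
    have d: "\<forall>v. deg ends F v \<noteq> 1"
    proof
      fix v have "even (deg ends F v)" using Fcs unfolding oddv_def by auto
      then show "deg ends F v \<noteq> 1" by (metis odd_one)
    qed
    obtain n p q where cr: "cyc_rep ends n p q" and qF: "range q \<subseteq> F"
      using find_cycle[OF g Fcs(1) Fne d] by blast
    have qE: "range q \<subseteq> E" using qF Fcs by auto
    have Feq: "range q = F"
    proof (rule ccontr)
      assume "range q \<noteq> F"
      then have ps: "range q \<subset> F" using qF by auto
      have "range q \<in> spanW Cyc"
        using small[OF qE cr_odd[OF cr]] el_strict[OF pos finF Fcs(1) ps] by simp
      moreover have "xr F (range q) \<in> spanW Cyc"
      proof (rule small)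
        show "xr F (range q) \<subseteq> E" using xr_sub[OF Fcs(1) qE] .
        show "oddv ends (xr F (range q)) = {}" using Fcs cr_odd[OF cr] finF cr_finite[OF cr] by (simp add: oddv_xr)
        have "xr F (range q) \<subset> F" using qF unfolding xr_def by auto
        then show "?l (xr F (range q)) < ?l F" using el_strict[OF pos finF Fcs(1)] by simp
      qed
      ultimately have "xr (xr F (range q)) (range q) \<in> spanW Cyc" using spanW_xr by blast
      then show False using FnW by (simp add: xr_cancel)
    qed
    have cyc: "is_cycle V E ends (range p, range q)" using cr_is_cycle[OF g cr qE] .
    have nfg: "\<not> fully_geodesic V E ends len (range p, range q)"
    proof
      assume "fully_geodesic V E ends len (range p, range q)"
      then have "F \<in> Cyc" using cyc Feq unfolding Cyc_def by force
      then show False using FnW spanW_gen by blast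
    qed
    then obtain k where "\<not> k_geodesic V E ends len k (range p, range q)" unfolding fully_geodesic_def by blast
    then obtain A where A: "A \<subseteq> range p" "finite A" "card A \<le> k"
      and neq: "sd ends len (range p, range q) A \<noteq> sd ends len (V, E) A"
      using cyc unfolding k_geodesic_def is_cycle_def by auto
    have "sd ends len (V, E) A \<le> sd ends len (range p, range q) A"
      using sd_mono cyc unfolding is_cycle_def by blast
    then have lt: "sd ends len (V, E) A < sd ends len (range p, range q) A" using neq by simp
    obtain S where S: "subgraph V E ends S" "connected_sg ends S" "A \<subseteq> fst S"
      and Sl: "ereal (?l (snd S)) < sd ends len (range p, range q) A"
      using sd_lessE[OF lt] by auto
    have short: "\<And>S'. subgraph (range p) (range q) ends S' \<Longrightarrow> connected_sg ends S' \<Longrightarrow> A \<subseteq> fst S'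
        \<Longrightarrow> ?l (snd S) < ?l (snd S')"
    proof -
      fix S' assume "subgraph (range p) (range q) ends S'" "connected_sg ends S'" "A \<subseteq> fst S'"
      then have "sd ends len (range p, range q) A \<le> ereal (?l (snd S'))" using sd_le[of "(range p, range q)"] by simp
      then have "ereal (?l (snd S)) < ereal (?l (snd S'))" using Sl by (rule order.strict_trans2[rotated])
      then show "?l (snd S) < ?l (snd S')" by simp
    qed
    have SE: "snd S \<subseteq> E" using S unfolding subgraph_def by auto
    show False
    proof (cases "A = {}")
      case True
      have "subgraph (range p) (range q) ends ({p 0}, {})" unfolding subgraph_def by auto
      moreover have "connected_sg ends ({p 0}, {})" unfolding connected_sg_def by auto
      ultimately have "?l (snd S) < ?l {}" using short[of "({p 0}, {})"] True by simp
      moreover have "?l (snd S) \<ge> 0" using el_nonneg[OF pos SE] .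
      ultimately show False by (simp add: edge_length_def)
    next
      case False
      then obtain a where "a \<in> A" by auto
      then obtain r where r: "p r \<in> A" using A by auto
      define p' where "p' = (\<lambda>i. p (i + r))"
      define q' where "q' = (\<lambda>i. q (i + r))"
      have cr': "cyc_rep ends n p' q'" unfolding p'_def q'_def using cr_rot[OF cr] .
      have rp: "range p' = range p" and rq: "range q' = range q"
        unfolding p'_def q'_def using cr_range_rot[OF cr] by auto
      have "range q' \<in> spanW Cyc"
      proof (rule arc_main[OF g pos cr', where A = A and S = S])
        show "range q' \<subseteq> E" using rq qE by simp
        show "\<And>X Y. X \<in> spanW Cyc \<Longrightarrow> Y \<in> spanW Cyc \<Longrightarrow> xr X Y \<in> spanW Cyc" using spanW_xr by blast
        show "\<And>F'. F' \<subseteq> E \<Longrightarrow> oddv ends F' = {} \<Longrightarrow> ?l F' < ?l (range q') \<Longrightarrow> F' \<in> spanW Cyc"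
          using small rq Feq by simp
        show "p' 0 \<in> A" using r unfolding p'_def by simp
        show "A \<subseteq> range p'" using A rp by simp
        show "connected_sg ends S" "subgraph V E ends S" "A \<subseteq> fst S" using S by auto
        show "\<And>S'. subgraph (range p') (range q') ends S' \<Longrightarrow> connected_sg ends S' \<Longrightarrow> A \<subseteq> fst S'
          \<Longrightarrow> ?l (snd S) < ?l (snd S')" using short rp rq by simp
      qed
      then show False using rq Feq FnW by simp
    qed
  qed
  show ?thesis using sup sub unfolding Cyc_def spanW_def by blast
qed

end
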